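(* Let $n\in\mathbb{N}=\{1,2,\dots\}$. Then, with $t_1<\dots<t_n$ the zeros of $H_n$, $$\|h_n\|_1=\int_{-\infty}^\infty|h_n(t)|\,dt=\frac1n\sum_{m=1}^n(-1)^{m+n}h_{n-1}(t_m);$$ with $t_1<\dots<t_{2n+1}$ the zeros of $H_{2n+1}$, $$\int_{-\infty}^\infty\frac{t^{2n}}{(2n)!}|h_{2n+1}(t)|\,dt=\frac{1}{(2n+1)!}\sum_{m=1}^{2n+1}(-1)^{m+1}\sum_{k=0}^{2n}\frac{1}{2^k}t_m^{2n-k}h_{2n-k}(t_m);$$ and with $t_1<\dots<t_{2n}$ the zeros of $H_{2n}$, $$\int_{-\infty}^\infty\frac{|t|^{2n-1}}{(2n-1)!}|h_{2n}(t)|\,dt=\frac{1}{(2n)!}\sum_{m=1}^{n}(-1)^{m+1}\sum_{k=0}^{2n-1}\frac{1}{2^k}t_m^{2n-1-k}h_{2n-1-k}(t_m)+\frac{(-1)^n}{(2n)!\,2^{2n-1}\sqrt{\pi}}+\frac{1}{(2n)!}\sum_{m=n+1}^{2n}(-1)^{m}\sum_{k=0}^{2n-1}\frac{1}{2^k}t_m^{2n-1-k}h_{2n-1-k}(t_m).$$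
   Context: $H_n$ denotes the $n$-th Hermite polynomial ($H_n(t)=(-1)^ne^{t^2}\frac{d^n}{dt^n}e^{-t^2}$), and the Hermite functions are $h_n(t)=\frac{1}{2^nn!\sqrt{\pi}}e^{-t^2}H_n(t)$, $t\in\mathbb{R}$. *)

theory Defs
  imports "HOL-Analysis.Analysis"
begin

definition hermite :: "nat \<Rightarrow> real \<Rightarrow> real" where
  "hermite n t = (-1) ^ n * exp (t\<^sup>2) * (deriv ^^ n) (\<lambda>s. exp (- s\<^sup>2)) t"

definition hermite_fun :: "nat \<Rightarrow> real \<Rightarrow> real" where
  "hermite_fun n t = exp (- t\<^sup>2) * hermite n t / (2 ^ n * fact n * sqrt pi)"

definition hermite_zero :: "nat \<Rightarrow> nat \<Rightarrow> real" where
  "hermite_zero n m = sorted_list_of_set {t. hermite n t = 0} ! (m - 1)"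

end

theory Submission
  imports Defs "HOL-Computational_Algebra.Polynomial" "HOL-Real_Asymp.Real_Asymp"
begin



fun Hp :: "nat \<Rightarrow> real poly" where
  "Hp 0 = 1"
| "Hp (Suc n) = [:0, 2:] * Hp n - pderiv (Hp n)"

declare Hp.simps(2)[simp del]

lemma rodrigues:
  "(deriv ^^ n) (\<lambda>s. exp (- s\<^sup>2)) = (\<lambda>t. (-1) ^ n * exp (- t\<^sup>2) * poly (Hp n) t)"
proof (induction n)
  case 0
  then show ?case by simp
next
  case (Suc n)
  have d: "DERIV (\<lambda>t. (-1) ^ n * exp (- t\<^sup>2) * poly (Hp n) t) t :>
     (-1) ^ Suc n * exp (- t\<^sup>2) * poly (Hp (Suc n)) t" for t
    by (auto intro!: derivative_eq_intros poly_DERIV[THEN DERIV_cong] simp: algebra_simps power2_eq_square Hp.simps(2))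
  show ?case
    unfolding funpow.simps comp_def Suc.IH by (rule ext) (rule DERIV_imp_deriv[OF d])
qed

lemma hermite_poly: "hermite n t = poly (Hp n) t"
  unfolding hermite_def rodrigues by (simp add: exp_minus field_simps)

lemma hermite_fun_poly: "hermite_fun n t = exp (- t\<^sup>2) * poly (Hp n) t / (2 ^ n * fact n * sqrt pi)"
  by (simp add: hermite_fun_def hermite_poly)

lemma Hp_deg: "degree (Hp n) = n \<and> lead_coeff (Hp n) = 2 ^ n"
proof (induction n)
  case 0
  then show ?case by simp
next
  case (Suc n)
  have d1: "degree ([:0, 2:] * Hp n) = Suc n"
    using Suc by (subst degree_mult_eq) auto
  have cn: "coeff (Hp n) n = 2 ^ n" using Suc.IH by metis
  have c1: "coeff ([:0, 2:] * Hp n) (Suc n) = 2 ^ Suc n"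
    using cn by (simp add: coeff_pCons)
  have d2: "degree (pderiv (Hp n)) < Suc n"
    using Suc by (metis degree_pderiv diff_le_self le_imp_less_Suc)
  have "degree ([:0, 2:] * Hp n - pderiv (Hp n)) = Suc n"
    using d1 d2 by (metis degree_add_eq_left degree_minus diff_conv_add_uminus)
  moreover have "coeff ([:0, 2:] * Hp n - pderiv (Hp n)) (Suc n) = 2 ^ Suc n"
    using c1 d2 by (simp add: coeff_eq_0)
  ultimately show ?case by (simp add: Hp.simps(2))
qed

lemma Hp_nz: "Hp n \<noteq> 0"
  using Hp_deg[of n] by (metis leading_coeff_0_iff power_not_zero zero_neq_numeral)

lemma pderiv_X2: "pderiv ([:0, 2:] * p) = smult 2 p + [:0, 2:] * pderiv (p::real poly)"
  by (simp add: pderiv_mult pderiv_pCons pderiv_smult algebra_simps)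

lemma Hp_pderiv: "pderiv (Hp (Suc n)) = smult (2 * (n + 1)) (Hp n)"
proof (induction n)
  case 0
  then show ?case by (simp add: pderiv_pCons Hp.simps(2))
next
  case (Suc n)
  have "pderiv (Hp (Suc (Suc n))) = pderiv ([:0, 2:] * Hp (Suc n)) - pderiv (pderiv (Hp (Suc n)))"
    by (simp add: pderiv_diff Hp.simps(2))
  also have "\<dots> = smult 2 (Hp (Suc n)) + [:0, 2:] * smult (2 * (n + 1)) (Hp n)
       - pderiv (smult (2 * (n + 1)) (Hp n))"
    by (simp only: pderiv_X2 Suc.IH pderiv_smult) (simp add: algebra_simps)
  also have "\<dots> = smult 2 (Hp (Suc n)) + smult (2 * (n + 1)) (Hp (Suc n))"
    by (simp add: pderiv_smult Hp.simps(2)[of n] smult_diff_right)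
  also have "\<dots> = smult (2 * (real (Suc n) + 1)) (Hp (Suc n))"
    by (simp add: algebra_simps smult_add_left[symmetric])
  finally show ?case .
qed

lemma Hp_rec: "Hp (Suc (Suc n)) = [:0, 2:] * Hp (Suc n) - smult (2 * (n + 1)) (Hp n)"
  using Hp_pderiv[of n] by (simp add: Hp.simps(2)[of "Suc n"])

lemma Hp_parity: "poly (Hp n) (- t) = (-1) ^ n * poly (Hp n) t"
proof (induction n rule: less_induct)
  case (less n)
  show ?case
  proof (cases n)
    case 0 then show ?thesis by simp
  next
    case (Suc m)
    show ?thesis
    proof (cases m)
      case 0 then show ?thesis using Suc by (simp add: Hp.simps(2))
    next
      case (Suc k)
      have "poly (Hp n) (- t) = 2 * (-t) * poly (Hp (Suc k)) (-t) - 2 * (k+1) * poly (Hp k) (-t)"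
        using \<open>n = Suc m\<close> Suc by (simp add: Hp_rec)
      also have "\<dots> = (-1)^n * poly (Hp n) t"
        using less.IH[of k] less.IH[of "Suc k"] \<open>n = Suc m\<close> Suc by (simp add: Hp_rec algebra_simps)
      finally show ?thesis .
    qed
  qed
qed

lemma Hp_zero_even: "poly (Hp (2 * n)) 0 \<noteq> 0"
proof (induction n)
  case 0 then show ?case by simp
next
  case (Suc n)
  have "2 * Suc n = Suc (Suc (2 * n))" by simp
  then show ?case using Suc by (simp add: Hp_rec)
qed

lemma hermite_fun_deriv:
  "DERIV (hermite_fun n) t :> - (2 * (real n + 1)) * hermite_fun (Suc n) t"
proof -
  have "DERIV (\<lambda>t. exp (- t\<^sup>2) * poly (Hp n) t / (2 ^ n * fact n * sqrt pi)) t :>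
     (exp (- t\<^sup>2) * (- (2 * t)) * poly (Hp n) t + exp (- t\<^sup>2) * poly (pderiv (Hp n)) t) / (2 ^ n * fact n * sqrt pi)"
    by (auto intro!: derivative_eq_intros poly_DERIV)
  moreover have "(exp (- t\<^sup>2) * (- (2 * t)) * poly (Hp n) t + exp (- t\<^sup>2) * poly (pderiv (Hp n)) t) / (2 ^ n * fact n * sqrt pi)
     = - (2 * (real n + 1)) * hermite_fun (Suc n) t"
  proof -
    define c where "c = 2 ^ n * fact n * sqrt pi"
    have pos: "c > 0" by (simp add: c_def)
    have c2: "2 ^ Suc n * fact (Suc n) * sqrt pi = 2 * (real n + 1) * c"
      by (simp add: c_def algebra_simps)
    have h: "hermite_fun (Suc n) t = exp (- t\<^sup>2) * (2 * t * poly (Hp n) t - poly (pderiv (Hp n)) t) / (2 * (real n + 1) * c)"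
      unfolding hermite_fun_poly c2 by (simp add: Hp.simps(2))
    have k: "2 * (real n + 1) \<noteq> 0" by simp
    have aux: "- k * (x / (k * c)) = - (x / c)" if "k \<noteq> 0" for k x :: real
      using that by (cases "c = 0") (simp_all add: field_simps)
    have e: "exp (- t\<^sup>2) * (- (2 * t)) * poly (Hp n) t + exp (- t\<^sup>2) * poly (pderiv (Hp n)) t
       = - (exp (- t\<^sup>2) * (2 * t * poly (Hp n) t - poly (pderiv (Hp n)) t))"
      by (simp add: algebra_simps)
    show ?thesis unfolding h c_def[symmetric] aux[OF k] e by simp
  qed
  ultimately show ?thesis by (simp add: hermite_fun_poly[abs_def])
qed




lemma rolle_left_pos:
  fixes f f' :: "real \<Rightarrow> real"
  assumes der: "\<And>x. DERIV f x :> f' x" and lim: "(f \<longlongrightarrow> 0) at_bot"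
    and fa: "f a = 0" and ba: "b < a" and fb: "f b > 0"
  shows "\<exists>x<a. f' x = 0"
proof -
  have cont: "continuous_on S f" for S
    using der by (meson DERIV_isCont continuous_at_imp_continuous_on)
  have "((\<lambda>x. \<bar>f x\<bar>) \<longlongrightarrow> 0) at_bot" by (rule tendsto_rabs_zero[OF lim])
  then have "eventually (\<lambda>x. \<bar>f x\<bar> < f b) at_bot" using order_tendstoD(2) fb by blast
  then obtain N where N: "\<And>x. x \<le> N \<Longrightarrow> \<bar>f x\<bar> < f b"
    by (auto simp: eventually_at_bot_linorder)
  define c where "c = min N (b - 1)"
  have cb: "c < b" and fc: "f c < f b" using N[of c] by (auto simp: c_def)
  define y where "y = (max (f c) 0 + f b) / 2"
  have y1: "f c < y" "0 < y" "y < f b" using fc fb by (auto simp: y_def)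
  have "\<exists>x. c \<le> x \<and> x \<le> b \<and> f x = y"
    by (rule IVT') (use y1 cb cont in auto)
  then obtain p where p: "c \<le> p" "p \<le> b" "f p = y" by blast
  have "\<exists>x. b \<le> x \<and> x \<le> a \<and> f x = y"
    by (rule IVT2') (use y1 ba fa cont in auto)
  then obtain q where q: "b \<le> q" "q \<le> a" "f q = y" by blast
  have "p \<noteq> b" using p y1 by auto
  then have pq: "p < q" using p q by linarith
  have "q \<noteq> a" using q fa y1 by auto
  then have qa: "q < a" using q by linarith
  have diff: "f differentiable (at x)" for x using der real_differentiable_def by blast
  have fpq: "f p = f q" using p q by simp
  obtain z where z: "p < z" "z < q" "DERIV f z :> 0"
    using Rolle[OF pq fpq cont diff] by blast
  have "f' z = 0" using z(3) der DERIV_unique by blast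
  then show ?thesis using z qa by (intro exI[of _ z]) auto
qed

lemma rolle_left:
  fixes f f' :: "real \<Rightarrow> real"
  assumes der: "\<And>x. DERIV f x :> f' x" and lim: "(f \<longlongrightarrow> 0) at_bot"
    and fa: "f a = 0" and ba: "b < a" and fb: "f b \<noteq> 0"
  shows "\<exists>x<a. f' x = 0"
proof (cases "f b > 0")
  case True
  then show ?thesis using rolle_left_pos[OF der lim fa ba] by blast
next
  case False
  then have "- f b > 0" using fb by simp
  moreover have "\<And>x. DERIV (\<lambda>x. - f x) x :> - f' x" using der by (auto intro: derivative_intros)
  moreover have "((\<lambda>x. - f x) \<longlongrightarrow> 0) at_bot" using tendsto_minus[OF lim] by simp
  ultimately obtain x where "x < a" "- f' x = 0"
    using rolle_left_pos[of "\<lambda>x. - f x" "\<lambda>x. - f' x" a b] fa ba by auto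
  then show ?thesis by auto
qed

lemma rolle_right:
  fixes f f' :: "real \<Rightarrow> real"
  assumes der: "\<And>x. DERIV f x :> f' x" and lim: "(f \<longlongrightarrow> 0) at_top"
    and fa: "f a = 0" and ba: "a < b" and fb: "f b \<noteq> 0"
  shows "\<exists>x>a. f' x = 0"
proof -
  have der': "\<And>x. DERIV (\<lambda>x. f (- x)) x :> - f' (- x)"
    using der DERIV_mirror by blast
  have lim': "((\<lambda>x. f (- x)) \<longlongrightarrow> 0) at_bot"
    using lim by (simp add: at_bot_mirror filterlim_filtermap)
  obtain x where "x < - a" "- f' (- x) = 0"
    using rolle_left[OF der' lim', of "-a" "-b"] fa ba fb by auto
  then show ?thesis by (intro exI[of _ "-x"]) auto
qed

lemma count_step:
  fixes f f' :: "real \<Rightarrow> real"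
  assumes der: "\<And>x. DERIV f x :> f' x" and lb: "(f \<longlongrightarrow> 0) at_bot" and lt: "(f \<longlongrightarrow> 0) at_top"
    and fin: "finite {x. f x = 0}" and fin': "finite {x. f' x = 0}" and ne: "{x. f x = 0} \<noteq> {}"
  shows "card {x. f' x = 0} \<ge> card {x. f x = 0} + 1"
proof -
  let ?Z = "{x. f x = 0}" and ?Z' = "{x. f' x = 0}"
  have nz_left: "\<exists>c<a. f c \<noteq> 0" for a
  proof (rule ccontr)
    assume "\<not> ?thesis"
    then have "{..<a} \<subseteq> ?Z" by auto
    moreover have "infinite {..<a}" by (simp add: infinite_Iio)
    ultimately show False using fin finite_subset by blast
  qed
  have nz_right: "\<exists>c>a. f c \<noteq> 0" for a
  proof (rule ccontr)
    assume "\<not> ?thesis"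
    then have "{a<..} \<subseteq> ?Z" by auto
    moreover have "infinite {a<..}" by (simp add: infinite_Ioi)
    ultimately show False using fin finite_subset by blast
  qed
  have cont: "continuous_on S f" for S
    using der by (meson DERIV_isCont continuous_at_imp_continuous_on)
  have main: "A \<subseteq> ?Z \<longrightarrow> (\<exists>B \<subseteq> ?Z'. finite B \<and> card B = card A \<and> (\<forall>x\<in>B. \<exists>a\<in>A. x < a))"
    if "finite A" for A
    using that
  proof (induction A rule: finite_linorder_max_induct)
    case empty
    then show ?case by auto
  next
    case (insert b A)
    show ?case
    proof
      assume sub: "insert b A \<subseteq> ?Z"
      then have fb: "f b = 0" by auto
      show "\<exists>B \<subseteq> ?Z'. finite B \<and> card B = card (insert b A) \<and> (\<forall>x\<in>B. \<exists>a\<in>insert b A. x < a)"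
      proof (cases "A = {}")
        case True
        obtain c where "c < b" "f c \<noteq> 0" using nz_left by blast
        then obtain x where "x < b" "f' x = 0" using rolle_left[OF der lb fb] by blast
        then show ?thesis using True by (intro exI[of _ "{x}"]) auto
      next
        case False
        obtain B where B: "B \<subseteq> ?Z'" "finite B" "card B = card A" "\<forall>x\<in>B. \<exists>a\<in>A. x < a"
          using insert sub by auto
        define m where "m = Max A"
        have mA: "m \<in> A" "m < b" using False insert by (auto simp: m_def)
        have Bm: "\<forall>x\<in>B. x < m" using B(4) insert(1) m_def by (meson Max_ge order_less_le_trans)
        have fm: "f m = 0" using sub mA by auto
        have diff: "f differentiable (at x)" for x using der real_differentiable_def by blast
        have fmb: "f m = f b" using fm fb by simp
        obtain z where z: "m < z" "z < b" "DERIV f z :> 0"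
          using Rolle[OF mA(2) fmb cont diff] by blast
        have fz: "f' z = 0" using z(3) der DERIV_unique by blast
        have zB: "z \<notin> B" using Bm z by auto
        have bA: "b \<notin> A" using insert by auto
        have "insert z B \<subseteq> ?Z'" using B fz by auto
        moreover have "card (insert z B) = card (insert b A)" using B zB bA insert(1) by simp
        moreover have "\<forall>x\<in>insert z B. \<exists>a\<in>insert b A. x < a"
        proof
          fix x assume "x \<in> insert z B"
          then show "\<exists>a\<in>insert b A. x < a"
          proof
            assume "x = z" then show ?thesis using z by auto
          next
            assume "x \<in> B" then show ?thesis using B(4) by auto
          qed
        qed
        ultimately show ?thesis using B(2) by blast
      qed
    qed
  qed
  obtain B where B: "B \<subseteq> ?Z'" "finite B" "card B = card ?Z" "\<forall>x\<in>B. \<exists>a\<in>?Z. x < a"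
    using main[OF fin] by auto
  define m where "m = Max ?Z"
  have mZ: "f m = 0" using Max_in[OF fin ne] m_def by auto
  have Bm: "\<forall>x\<in>B. x < m" using B(4) fin m_def by (meson Max_ge order_less_le_trans)
  obtain c where "c > m" "f c \<noteq> 0" using nz_right by blast
  then obtain w where w: "w > m" "f' w = 0" using rolle_right[OF der lt mZ] by blast
  have "w \<notin> B" using Bm w by auto
  then have "card (insert w B) = card ?Z + 1" using B by simp
  moreover have "insert w B \<subseteq> ?Z'" using B w by auto
  ultimately show ?thesis using card_mono[OF fin'] by metis
qed




lemma prod_roots_dvd:
  fixes p :: "real poly"
  assumes "finite S" "\<forall>z\<in>S. poly p z = 0"
  shows "(\<Prod>z\<in>S. [:-z, 1:]) dvd p"
  using assms
proof (induction S rule: finite_induct)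
  case empty then show ?case by simp
next
  case (insert a S)
  then obtain q where q: "p = (\<Prod>z\<in>S. [:-z, 1:]) * q" by (auto elim: dvdE)
  have "poly (\<Prod>z\<in>S. [:-z, 1:]) a \<noteq> 0"
    using insert(1,2) by (auto simp: poly_prod)
  moreover have "poly p a = 0" using insert by auto
  ultimately have "poly q a = 0" using q by simp
  then have "[:-a, 1:] dvd q" by (simp add: poly_eq_0_iff_dvd)
  then obtain r where r: "q = [:-a, 1:] * r" by (auto elim: dvdE)
  have "p = (\<Prod>z\<in>insert a S. [:-z, 1:]) * r"
    unfolding prod.insert[OF insert(1,2)] q r by (simp only: ac_simps)
  then show ?case by auto
qed

lemma poly_full_roots:
  fixes p :: "real poly"
  assumes p0: "p \<noteq> 0" and card: "card {x. poly p x = 0} = degree p"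
  shows "poly p t = lead_coeff p * (\<Prod>z\<in>{x. poly p x = 0}. (t - z))"
proof -
  let ?Z = "{x. poly p x = 0}"
  have fin: "finite ?Z" using poly_roots_finite[OF p0] .
  let ?P = "\<Prod>z\<in>?Z. [:-z, 1:]"
  obtain q where q: "p = ?P * q" using prod_roots_dvd[OF fin] by (auto elim: dvdE)
  have P0: "?P \<noteq> 0" using fin by (simp add: prod_zero_iff)
  have q0: "q \<noteq> 0" using q p0 by auto
  have dP: "degree ?P = card ?Z" using fin by (simp add: degree_prod_eq_sum_degree)
  have "degree p = degree ?P + degree q" using degree_mult_eq[OF P0 q0] q by simp
  then have dq: "degree q = 0" using dP card by simp
  have lP: "lead_coeff ?P = 1" by (simp add: lead_coeff_prod)
  have "lead_coeff (?P * q) = lead_coeff ?P * lead_coeff q" by (rule lead_coeff_mult)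
  then have "lead_coeff p = lead_coeff ?P * lead_coeff q" using q by metis
  then have lq: "lead_coeff p = coeff q 0" using lP dq by simp
  have "q = [:coeff q 0:]" using dq by (metis degree_eq_zeroE coeff_pCons_0)
  then have "poly q t = lead_coeff p" using lq by (metis poly_pCons poly_0 mult_zero_right add.right_neutral)
  moreover have "poly ?P t = (\<Prod>z\<in>?Z. (t - z))" by (simp add: poly_prod)
  moreover have "poly p t = poly (?P * q) t" using q by (rule arg_cong)
  ultimately show ?thesis by (simp only: poly_mult mult.commute)
qed

lemma abs_prod_sign:
  fixes S :: "real set"
  assumes "finite S" "t \<notin> S"
  shows "\<bar>\<Prod>z\<in>S. (t - z)\<bar> = (-1) ^ card {z\<in>S. t < z} * (\<Prod>z\<in>S. (t - z))"
  using assms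
proof (induction S rule: finite_induct)
  case empty then show ?case by simp
next
  case (insert a S)
  have fin: "finite {z\<in>S. t < z}" using insert(1) by simp
  have an: "a \<notin> {z\<in>S. t < z}" using insert(2) by simp
  show ?case
  proof (cases "t < a")
    case True
    then have "{z\<in>insert a S. t < z} = insert a {z\<in>S. t < z}" by auto
    let ?c = "card {z\<in>S. t < z}"
    have "\<bar>\<Prod>z\<in>insert a S. (t - z)\<bar> = \<bar>t - a\<bar> * \<bar>\<Prod>z\<in>S. (t - z)\<bar>"
      using insert(1,2) by (simp add: abs_mult)
    also have "\<dots> = (a - t) * ((-1) ^ ?c * (\<Prod>z\<in>S. (t - z)))"
      using True insert by simp
    also have "\<dots> = (-1) ^ Suc ?c * ((t - a) * (\<Prod>z\<in>S. (t - z)))" by (simp add: algebra_simps)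
    also have "\<dots> = (-1) ^ card {z\<in>insert a S. t < z} * (\<Prod>z\<in>insert a S. (t - z))"
      using \<open>{z\<in>insert a S. t < z} = insert a {z\<in>S. t < z}\<close> fin an insert(1,2) by simp
    finally show ?thesis .
  next
    case False
    then have "t > a" using insert(4) by auto
    then have "{z\<in>insert a S. t < z} = {z\<in>S. t < z}" by auto
    then show ?thesis using insert \<open>t > a\<close> by (simp add: abs_mult)
  qed
qed




lemma deriv_glue:
  fixes f g h :: "real \<Rightarrow> real"
  assumes d: "\<delta> > 0" and fg: "\<And>s. x - \<delta> < s \<Longrightarrow> s \<le> x \<Longrightarrow> f s = g s"
    and fh: "\<And>s. x \<le> s \<Longrightarrow> s < x + \<delta> \<Longrightarrow> f s = h s"
    and dg: "DERIV g x :> D" and dh: "DERIV h x :> D"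
  shows "DERIV f x :> D"
proof -
  have gq: "((\<lambda>y. (g y - g x) / (y - x)) \<longlongrightarrow> D) (at x)" using dg has_field_derivative_iff by blast
  have hq: "((\<lambda>y. (h y - h x) / (y - x)) \<longlongrightarrow> D) (at x)" using dh has_field_derivative_iff by blast
  have fx: "f x = g x" "f x = h x" using fg[of x] fh[of x] d by auto
  have L: "((\<lambda>y. (f y - f x) / (y - x)) \<longlongrightarrow> D) (at_left x)"
  proof -
    have "((\<lambda>y. (g y - g x) / (y - x)) \<longlongrightarrow> D) (at_left x)"
      using gq filterlim_at_split by blast
    moreover have "eventually (\<lambda>y. y \<in> {x - \<delta><..<x}) (at_left x)"
      by (rule eventually_at_left_real) (use d in simp)
    then have "eventually (\<lambda>y. (g y - g x) / (y - x) = (f y - f x) / (y - x)) (at_left x)"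
      by eventually_elim (use fg fx in auto)
    ultimately show ?thesis by (rule Lim_transform_eventually)
  qed
  have R: "((\<lambda>y. (f y - f x) / (y - x)) \<longlongrightarrow> D) (at_right x)"
  proof -
    have "((\<lambda>y. (h y - h x) / (y - x)) \<longlongrightarrow> D) (at_right x)"
      using hq filterlim_at_split by blast
    moreover have "eventually (\<lambda>y. y \<in> {x<..<x + \<delta>}) (at_right x)"
      by (rule eventually_at_right_real) (use d in simp)
    then have "eventually (\<lambda>y. (h y - h x) / (y - x) = (f y - f x) / (y - x)) (at_right x)"
      by eventually_elim (use fh fx in auto)
    ultimately show ?thesis by (rule Lim_transform_eventually)
  qed
  have "((\<lambda>y. (f y - f x) / (y - x)) \<longlongrightarrow> D) (at x)"
    using L R filterlim_at_split by blast
  then show ?thesis using has_field_derivative_iff by blast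
qed

lemma max_bound: "finite S \<Longrightarrow> w \<in> S \<Longrightarrow> w < Max (insert 0 S) + (1::real)"
proof -
  assume "finite S" "w \<in> S"
  then have "w \<le> Max (insert 0 S)" by simp
  then show ?thesis by linarith
qed

lemma abs_integral:
  fixes \<phi> \<Phi> :: "real \<Rightarrow> real" and S :: "real set"
  assumes fin: "finite S" and der: "\<And>t. DERIV \<Phi> t :> \<phi> t" and cont: "\<And>t. isCont \<phi> t"
    and zero: "\<And>z. z \<in> S \<Longrightarrow> \<phi> z = 0"
    and sgn: "\<And>t. t \<notin> S \<Longrightarrow> \<bar>\<phi> t\<bar> = (-1) ^ card {z\<in>S. t < z} * \<phi> t"
    and lb: "(\<Phi> \<longlongrightarrow> L1) at_bot" and lt: "(\<Phi> \<longlongrightarrow> L2) at_top"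
  shows "(\<integral>t. \<bar>\<phi> t\<bar> \<partial>lborel) = L2 - (-1) ^ card S * L1
           + (\<Sum>z\<in>S. 2 * (-1) ^ (card {w\<in>S. z < w} + 1) * \<Phi> z)"
proof -
  define \<sigma> where "\<sigma> t = (-1::real) ^ card {w\<in>S. t \<le> w}" for t
  define c where "c z = 2 * (-1::real) ^ (card {w\<in>S. z < w} + 1) * \<Phi> z" for z
  define C where "C t = (\<Sum>z\<in>{z\<in>S. z < t}. c z)" for t
  define \<Psi> where "\<Psi> t = \<sigma> t * \<Phi> t + C t" for t
  have D: "DERIV \<Psi> t :> \<bar>\<phi> t\<bar>" for t
  proof -
    obtain \<delta> where d: "\<delta> > 0" "\<forall>w\<in>S. w \<noteq> t \<longrightarrow> \<delta> \<le> dist t w"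
      using finite_set_avoid[OF fin] by blast
    have key1: "s \<le> w \<longleftrightarrow> t < w" if "\<bar>s - t\<bar> < \<delta>" "w \<in> S" "w \<noteq> t" for s w
      using d(2) that by (auto simp: dist_real_def)
    have key2: "w < s \<longleftrightarrow> w < t" if "\<bar>s - t\<bar> < \<delta>" "w \<in> S" "w \<noteq> t" for s w
      using d(2) that by (auto simp: dist_real_def)
    show ?thesis
    proof (cases "t \<in> S")
      case False
      have e1: "{w\<in>S. s \<le> w} = {w\<in>S. t < w}" if "\<bar>s - t\<bar> < \<delta>" for s
        using key1[OF that] False by auto
      have e2: "{z\<in>S. z < s} = {z\<in>S. z < t}" if "\<bar>s - t\<bar> < \<delta>" for s
        using key2[OF that] False by auto
      have ev: "eventually (\<lambda>s. \<Psi> s = \<sigma> t * \<Phi> s + C t) (nhds t)"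
      proof -
        have "eventually (\<lambda>s. s \<in> ball t \<delta>) (nhds t)" using d(1) by (intro eventually_nhds_in_open) auto
        then show ?thesis
        proof eventually_elim
          case (elim s)
          then have "\<bar>s - t\<bar> < \<delta>" by (auto simp: dist_real_def)
          then show ?case using e1[of s] e1[of t] e2[of s] d(1) by (simp add: \<Psi>_def \<sigma>_def C_def)
        qed
      qed
      have "DERIV (\<lambda>s. \<sigma> t * \<Phi> s + C t) t :> \<sigma> t * \<phi> t"
        using der by (auto intro!: derivative_eq_intros)
      moreover have "\<sigma> t * \<phi> t = \<bar>\<phi> t\<bar>"
        using sgn[OF False] e1[of t] d(1) by (simp add: \<sigma>_def)
      ultimately show ?thesis using DERIV_cong_ev[OF refl ev refl] by simp
    next
      case True
      have p0: "\<phi> t = 0" using zero True by simp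
      define \<sigma>' where "\<sigma>' = (-1::real) ^ card {w\<in>S. t < w}"
      have fin1: "finite {w\<in>S. t < w}" using fin by simp
      have ins: "{w\<in>S. t \<le> w} = insert t {w\<in>S. t < w}" using True by auto
      have st: "\<sigma> t = - \<sigma>'" unfolding \<sigma>_def \<sigma>'_def ins using fin1 by simp
      define g where "g s = \<sigma> t * \<Phi> s + C t" for s
      define h where "h s = \<sigma>' * \<Phi> s + C t + c t" for s
      have fg: "\<Psi> s = g s" if "t - \<delta> < s" "s \<le> t" for s
      proof -
        have a: "\<bar>s - t\<bar> < \<delta>" using that d(1) by auto
        have "(s \<le> w) = (t \<le> w)" if "w \<in> S" for w
          using key1[OF a that] \<open>s \<le> t\<close> by (cases "w = t") auto
        then have "{w\<in>S. s \<le> w} = {w\<in>S. t \<le> w}" by auto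
        moreover have "{z\<in>S. z < s} = {z\<in>S. z < t}" using key2[OF a] that by auto
        ultimately show ?thesis by (simp add: \<Psi>_def g_def \<sigma>_def C_def)
      qed
      have ght: "g t = h t"
        using st by (simp add: g_def h_def c_def \<sigma>'_def algebra_simps)
      have fh: "\<Psi> s = h s" if "t \<le> s" "s < t + \<delta>" for s
      proof (cases "s = t")
        case True
        then show ?thesis using fg[of t] d(1) ght by simp
      next
        case False
        then have st': "t < s" using that by simp
        have a: "\<bar>s - t\<bar> < \<delta>" using that d(1) by auto
        have "{w\<in>S. s \<le> w} = {w\<in>S. t < w}" using key1[OF a] st' by auto
        moreover have "{z\<in>S. z < s} = insert t {z\<in>S. z < t}" using key2[OF a] st' True by auto
        moreover have "finite {z\<in>S. z < t}" using fin by simp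
        ultimately show ?thesis by (simp add: \<Psi>_def h_def \<sigma>'_def \<sigma>_def C_def)
      qed
      have dg: "DERIV g t :> \<bar>\<phi> t\<bar>"
        unfolding g_def using der[of t] p0 by (auto intro!: derivative_eq_intros)
      have dh: "DERIV h t :> \<bar>\<phi> t\<bar>"
        unfolding h_def using der[of t] p0 by (auto intro!: derivative_eq_intros)
      show ?thesis by (rule deriv_glue[OF d(1) fg fh dg dh])
    qed
  qed
  have Lt: "(\<Psi> \<longlongrightarrow> L2 + C (Max (insert 0 S) + 1)) at_top"
  proof -
    define M where "M = Max (insert 0 S) + 1"
    have "eventually (\<lambda>s. \<Phi> s + C M = \<Psi> s) at_top"
      unfolding eventually_at_top_linorder
    proof (intro exI allI impI)
      fix s assume "s \<ge> M"
      have a: "\<forall>w\<in>S. w < s"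
      proof
        fix w assume "w \<in> S"
        then have "w \<le> Max (insert 0 S)" using fin by simp
        then show "w < s" using \<open>s \<ge> M\<close> by (simp add: M_def)
      qed
      then have e1: "{w\<in>S. s \<le> w} = {}" by auto
      moreover have e2: "{z\<in>S. z < s} = {z\<in>S. z < M}"
      proof -
        have "\<forall>w\<in>S. w < M" using fin max_bound by (auto simp: M_def)
        then show ?thesis using a by auto
      qed
      show "\<Phi> s + C M = \<Psi> s" unfolding \<Psi>_def \<sigma>_def C_def e1 e2 by simp
    qed
    moreover have "((\<lambda>s. \<Phi> s + C M) \<longlongrightarrow> L2 + C M) at_top"
      using lt by (intro tendsto_intros)
    ultimately show ?thesis unfolding M_def by (rule Lim_transform_eventually[rotated])
  qed
  have Lb: "(\<Psi> \<longlongrightarrow> (-1) ^ card S * L1) at_bot"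
  proof -
    define M where "M = Min (insert 0 S) - 1"
    have "eventually (\<lambda>s. (-1) ^ card S * \<Phi> s = \<Psi> s) at_bot"
      unfolding eventually_at_bot_linorder
    proof (intro exI allI impI)
      fix s assume "s \<le> M"
      have a: "\<forall>w\<in>S. s < w"
      proof
        fix w assume "w \<in> S"
        then have "w \<ge> Min (insert 0 S)" using fin by simp
        then show "s < w" using \<open>s \<le> M\<close> by (simp add: M_def)
      qed
      then have e1: "{w\<in>S. s \<le> w} = S" by auto
      have e2: "{z\<in>S. z < s} = {}" using a by auto
      show "(-1) ^ card S * \<Phi> s = \<Psi> s" unfolding \<Psi>_def \<sigma>_def C_def e1 e2 by simp
    qed
    moreover have "((\<lambda>s. (-1) ^ card S * \<Phi> s) \<longlongrightarrow> (-1) ^ card S * L1) at_bot"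
      using lb by (intro tendsto_intros)
    ultimately show ?thesis by (rule Lim_transform_eventually[rotated])
  qed
  have CM: "C (Max (insert 0 S) + 1) = (\<Sum>z\<in>S. c z)"
  proof -
    have "\<forall>w\<in>S. w < Max (insert 0 S) + 1" using fin max_bound by auto
    then have "{z\<in>S. z < Max (insert 0 S) + 1} = S" by auto
    then show ?thesis by (simp add: C_def)
  qed
  have "(LBINT x=-\<infinity>..\<infinity>. \<bar>\<phi> x\<bar>) = L2 + C (Max (insert 0 S) + 1) - (-1) ^ card S * L1"
  proof (rule interval_integral_FTC_nonneg(2))
    show "- \<infinity> < (\<infinity>::ereal)" by simp
    show "\<And>x. DERIV \<Psi> x :> \<bar>\<phi> x\<bar>" by (rule D)
    show "\<And>x. isCont (\<lambda>x. \<bar>\<phi> x\<bar>) x" using cont by (auto intro: continuous_intros)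
    show "AE x in lborel. - \<infinity> < ereal x \<longrightarrow> ereal x < \<infinity> \<longrightarrow> 0 \<le> \<bar>\<phi> x\<bar>" by simp
    show "((\<Psi> \<circ> real_of_ereal) \<longlongrightarrow> (-1) ^ card S * L1) (at_right (- \<infinity>))"
      using Lb by (simp add: ereal_tendsto_simps1)
    show "((\<Psi> \<circ> real_of_ereal) \<longlongrightarrow> L2 + C (Max (insert 0 S) + 1)) (at_left \<infinity>)"
      using Lt by (simp add: ereal_tendsto_simps1)
  qed
  moreover have "(LBINT x=-\<infinity>..\<infinity>. \<bar>\<phi> x\<bar>) = (\<integral>t. \<bar>\<phi> t\<bar> \<partial>lborel)"
    by (simp add: interval_lebesgue_integral_def einterval_eq_UNIV set_lebesgue_integral_def)
  ultimately show ?thesis using CM by (simp add: c_def algebra_simps)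
qed




lemma sorted_sum:
  fixes S :: "real set" and F :: "real \<Rightarrow> nat \<Rightarrow> real"
  assumes fin: "finite S" and cS: "card S = N"
  shows "(\<Sum>z\<in>S. F z (card {w\<in>S. z < w})) = (\<Sum>m=1..N. F (sorted_list_of_set S ! (m - 1)) (N - m))"
proof -
  define xs where "xs = sorted_list_of_set S"
  have dist: "distinct xs" and setx: "set xs = S" and len: "length xs = N"
    using fin cS by (auto simp: xs_def)
  have sw: "sorted_wrt (<) xs" using strict_sorted_list_of_set[of S] by (simp add: xs_def)
  have lt_iff: "xs ! i < xs ! j \<longleftrightarrow> i < j" if "i < N" "j < N" for i j
  proof
    assume "i < j" then show "xs ! i < xs ! j" using sorted_wrt_nth_less[OF sw] that len by auto
  next
    assume a: "xs ! i < xs ! j"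
    show "i < j"
    proof (rule ccontr)
      assume "\<not> i < j"
      then have "j < i \<or> j = i" by auto
      then show False
      proof
        assume "j < i" then have "xs ! j < xs ! i" using sorted_wrt_nth_less[OF sw] that len by auto
        then show False using a by simp
      qed (use a in simp)
    qed
  qed
  have bij: "bij_betw ((!) xs) {..<N} S" using bij_betw_nth[OF dist] len setx by simp
  have cnt: "card {w\<in>S. xs ! i < w} = N - 1 - i" if "i < N" for i
  proof -
    have "{w\<in>S. xs ! i < w} = (!) xs ` {i<..<N}"
    proof
      show "{w\<in>S. xs ! i < w} \<subseteq> (!) xs ` {i<..<N}"
      proof
        fix w assume w: "w \<in> {w\<in>S. xs ! i < w}"
        then obtain j where j: "j < N" "w = xs ! j" using setx len by (auto simp: in_set_conv_nth)
        then have "i < j" using lt_iff[OF that j(1)] w by auto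
        then show "w \<in> (!) xs ` {i<..<N}" using j by auto
      qed
    next
      show "(!) xs ` {i<..<N} \<subseteq> {w\<in>S. xs ! i < w}"
        using lt_iff[OF that] setx len by auto
    qed
    moreover have "inj_on ((!) xs) {i<..<N}"
      using bij by (rule bij_betw_imp_inj_on[THEN inj_on_subset]) auto
    ultimately show ?thesis by (simp add: card_image)
  qed
  have "(\<Sum>z\<in>S. F z (card {w\<in>S. z < w})) = (\<Sum>i<N. F (xs ! i) (card {w\<in>S. xs ! i < w}))"
    using sum.reindex_bij_betw[OF bij, of "\<lambda>z. F z (card {w\<in>S. z < w})"] by simp
  also have "\<dots> = (\<Sum>i<N. F (xs ! i) (N - 1 - i))"
    by (rule sum.cong) (auto simp: cnt)
  also have "\<dots> = (\<Sum>m=1..N. F (xs ! (m - 1)) (N - m))"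
    using sum.atLeast1_atMost_eq[of "\<lambda>m. F (xs ! (m - 1)) (N - m)" N] by simp
  finally show ?thesis by (simp add: xs_def)
qed

definition Zn :: "nat \<Rightarrow> real set" where "Zn n = {t. poly (Hp n) t = 0}"

lemma Zn_finite: "finite (Zn n)"
  unfolding Zn_def using poly_roots_finite[OF Hp_nz] .

lemma hermite_zero_set: "{t. hermite n t = 0} = Zn n"
  by (simp add: Zn_def hermite_poly)

lemma poly_exp_lim:
  fixes p :: "real poly"
  shows "((\<lambda>t. exp (- t\<^sup>2) * poly p t) \<longlongrightarrow> 0) at_top"
    and "((\<lambda>t. exp (- t\<^sup>2) * poly p t) \<longlongrightarrow> 0) at_bot"
proof -
  have e: "exp (- t\<^sup>2) * poly p t = (\<Sum>i\<le>degree p. coeff p i * (t ^ i * exp (- t\<^sup>2)))" for t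
    by (simp add: poly_altdef sum_distrib_left algebra_simps)
  have a: "((\<lambda>t::real. t ^ k * exp (- t\<^sup>2)) \<longlongrightarrow> 0) at_top" for k by real_asymp
  have b: "((\<lambda>t::real. t ^ k * exp (- t\<^sup>2)) \<longlongrightarrow> 0) at_bot" for k by real_asymp
  show "((\<lambda>t. exp (- t\<^sup>2) * poly p t) \<longlongrightarrow> 0) at_top"
    unfolding e by (intro tendsto_null_sum tendsto_mult_right_zero a)
  show "((\<lambda>t. exp (- t\<^sup>2) * poly p t) \<longlongrightarrow> 0) at_bot"
    unfolding e by (intro tendsto_null_sum tendsto_mult_right_zero b)
qed

lemma fexp_deriv:
  "DERIV (\<lambda>t. exp (- t\<^sup>2) * poly (Hp n) t) t :> - (exp (- t\<^sup>2) * poly (Hp (Suc n)) t)"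
proof -
  have "DERIV (\<lambda>t. exp (- t\<^sup>2) * poly (Hp n) t) t :>
     exp (- t\<^sup>2) * (- (2 * t)) * poly (Hp n) t + exp (- t\<^sup>2) * poly (pderiv (Hp n)) t"
    by (auto intro!: derivative_eq_intros poly_DERIV)
  moreover have "exp (- t\<^sup>2) * (- (2 * t)) * poly (Hp n) t + exp (- t\<^sup>2) * poly (pderiv (Hp n)) t
      = - (exp (- t\<^sup>2) * poly (Hp (Suc n)) t)"
    by (simp add: Hp.simps(2) algebra_simps)
  ultimately show ?thesis by simp
qed

lemma card_Zn: "card (Zn n) = n"
proof (induction n)
  case 0
  then show ?case by (simp add: Zn_def)
next
  case (Suc n)
  show ?case
  proof (cases "n = 0")
    case True
    have "Zn 1 = {0}" by (auto simp: Zn_def Hp.simps(2))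
    then show ?thesis using True by simp
  next
    case False
    let ?f = "\<lambda>t. exp (- t\<^sup>2) * poly (Hp n) t"
    have z1: "{x. ?f x = 0} = Zn n" by (simp add: Zn_def)
    have z2: "{x. - (exp (- x\<^sup>2) * poly (Hp (Suc n)) x) = 0} = Zn (Suc n)" by (simp add: Zn_def)
    have "card {x. - (exp (- x\<^sup>2) * poly (Hp (Suc n)) x) = 0} \<ge> card {x. ?f x = 0} + 1"
    proof (rule count_step[OF fexp_deriv poly_exp_lim(2) poly_exp_lim(1)])
      show "finite {x. ?f x = 0}" using Zn_finite z1 by simp
      show "finite {x. - (exp (- x\<^sup>2) * poly (Hp (Suc n)) x) = 0}" using Zn_finite z2 by simp
      show "{x. ?f x = 0} \<noteq> {}" using z1 Suc False by auto
    qed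
    then have "card (Zn (Suc n)) \<ge> Suc n" using z1 z2 Suc by simp
    moreover have "card (Zn (Suc n)) \<le> Suc n"
      using card_poly_roots_bound[OF Hp_nz, of "Suc n"] Hp_deg[of "Suc n"] by (simp add: Zn_def)
    ultimately show ?thesis by simp
  qed
qed

lemma Hp_factor: "poly (Hp n) t = 2 ^ n * (\<Prod>z\<in>Zn n. (t - z))"
proof -
  have l: "lead_coeff (Hp n) = 2 ^ n" and d: "degree (Hp n) = n" using Hp_deg[of n] by blast+
  have c: "card {x. poly (Hp n) x = 0} = degree (Hp n)" using card_Zn[of n] d by (simp add: Zn_def)
  show ?thesis using poly_full_roots[OF Hp_nz c, of t] unfolding l Zn_def .
qed

lemma Hp_abs: "t \<notin> Zn n \<Longrightarrow> \<bar>poly (Hp n) t\<bar> = (-1) ^ card {z\<in>Zn n. t < z} * poly (Hp n) t"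
  unfolding Hp_factor using abs_prod_sign[OF Zn_finite] by (simp add: abs_mult)

lemma hfun_abs: "t \<notin> Zn n \<Longrightarrow> \<bar>hermite_fun n t\<bar> = (-1) ^ card {z\<in>Zn n. t < z} * hermite_fun n t"
  unfolding hermite_fun_poly using Hp_abs[of t n] by (simp add: abs_mult)

lemma hfun_zero: "z \<in> Zn n \<Longrightarrow> hermite_fun n z = 0"
  by (simp add: hermite_fun_poly Zn_def)

lemma hfun_lim: "(hermite_fun n \<longlongrightarrow> 0) at_top" "(hermite_fun n \<longlongrightarrow> 0) at_bot"
  unfolding hermite_fun_poly[abs_def] using poly_exp_lim[of "Hp n"]
  by (auto intro: tendsto_divide_zero)

lemma hfun_cont: "isCont (hermite_fun n) t"
  using hermite_fun_deriv DERIV_isCont by blast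




definition Tm :: "nat \<Rightarrow> real \<Rightarrow> real" where
  "Tm M t = (\<Sum>k=0..M. (1 / 2 ^ k) * t ^ (M - k) * hermite_fun (M - k) t)"

lemma Tm_rec: "Tm (Suc M) t = t ^ Suc M * hermite_fun (Suc M) t + Tm M t / 2"
  unfolding Tm_def by (subst sum.atLeast0_atMost_Suc_shift) (simp add: sum_divide_distrib mult_ac)

lemma Tm_0: "Tm 0 = hermite_fun 0"
  by (rule ext) (simp add: Tm_def)

lemma Tm_deriv: "DERIV (Tm M) t :> - (2 * (real M + 1)) * t ^ M * hermite_fun (Suc M) t"
proof (induction M arbitrary: t)
  case 0
  then show ?case using hermite_fun_deriv[of 0 t] by (simp add: Tm_0)
next
  case (Suc M)
  have e: "Tm (Suc M) = (\<lambda>t. t ^ Suc M * hermite_fun (Suc M) t + Tm M t / 2)"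
    by (rule ext) (rule Tm_rec)
  have d1: "DERIV (\<lambda>t. t ^ Suc M) t :> real (Suc M) * t ^ M"
    using DERIV_pow[of "Suc M" t] by simp
  have "DERIV (\<lambda>t. t ^ Suc M * hermite_fun (Suc M) t + Tm M t / 2) t :>
      real (Suc M) * t ^ M * hermite_fun (Suc M) t
      + (- (2 * (real (Suc M) + 1)) * hermite_fun (Suc (Suc M)) t) * t ^ Suc M
      + (- (2 * (real M + 1)) * t ^ M * hermite_fun (Suc M) t) / 2"
    by (intro DERIV_add DERIV_mult d1 hermite_fun_deriv DERIV_cdivide Suc.IH)
  moreover have "real (Suc M) * t ^ M * hermite_fun (Suc M) t
      + (- (2 * (real (Suc M) + 1)) * hermite_fun (Suc (Suc M)) t) * t ^ Suc M
      + (- (2 * (real M + 1)) * t ^ M * hermite_fun (Suc M) t) / 2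
      = - (2 * (real (Suc M) + 1)) * t ^ Suc M * hermite_fun (Suc (Suc M)) t"
    by (simp add: field_simps)
  ultimately show ?case unfolding e by (rule DERIV_cong)
qed

lemma pow_h_lim:
  "((\<lambda>t. t ^ j * hermite_fun i t) \<longlongrightarrow> 0) at_top"
  "((\<lambda>t. t ^ j * hermite_fun i t) \<longlongrightarrow> 0) at_bot"
proof -
  have e: "(\<lambda>t. t ^ j * hermite_fun i t) =
     (\<lambda>t. exp (- t\<^sup>2) * poly ([:0, 1:] ^ j * Hp i) t / (2 ^ i * fact i * sqrt pi))"
    by (rule ext) (simp add: hermite_fun_poly poly_power)
  show "((\<lambda>t. t ^ j * hermite_fun i t) \<longlongrightarrow> 0) at_top"
    unfolding e by (intro tendsto_divide_zero poly_exp_lim)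
  show "((\<lambda>t. t ^ j * hermite_fun i t) \<longlongrightarrow> 0) at_bot"
    unfolding e by (intro tendsto_divide_zero poly_exp_lim)
qed

lemma Tm_lim: "(Tm M \<longlongrightarrow> 0) at_top" "(Tm M \<longlongrightarrow> 0) at_bot"
proof -
  have e: "Tm M = (\<lambda>t. \<Sum>k=0..M. (1 / 2 ^ k) * (t ^ (M - k) * hermite_fun (M - k) t))"
    by (rule ext) (simp add: Tm_def mult.assoc)
  show "(Tm M \<longlongrightarrow> 0) at_top"
    unfolding e by (intro tendsto_null_sum tendsto_mult_right_zero pow_h_lim)
  show "(Tm M \<longlongrightarrow> 0) at_bot"
    unfolding e by (intro tendsto_null_sum tendsto_mult_right_zero pow_h_lim)
qed

lemma neg1_eq: "even (a + b) \<Longrightarrow> (-1::real) ^ a = (-1) ^ b"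
  by (cases "even a") (auto simp: even_add)

lemma sorted_cnt:
  fixes S :: "real set"
  assumes fin: "finite S" and cS: "card S = N" and i: "i < N"
  shows "card {w\<in>S. sorted_list_of_set S ! i < w} = N - 1 - i"
    and "sorted_list_of_set S ! i \<in> S"
proof -
  define xs where "xs = sorted_list_of_set S"
  have dist: "distinct xs" and setx: "set xs = S" and len: "length xs = N"
    using fin cS by (auto simp: xs_def)
  have sw: "sorted_wrt (<) xs" using strict_sorted_list_of_set[of S] by (simp add: xs_def)
  have lt_iff: "xs ! i < xs ! j \<longleftrightarrow> i < j" if "i < N" "j < N" for i j
  proof
    assume "i < j" then show "xs ! i < xs ! j" using sorted_wrt_nth_less[OF sw] that len by auto
  next
    assume a: "xs ! i < xs ! j"
    show "i < j"
    proof (rule ccontr)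
      assume "\<not> i < j"
      then have "j < i \<or> j = i" by auto
      then show False
      proof
        assume "j < i" then have "xs ! j < xs ! i" using sorted_wrt_nth_less[OF sw] that len by auto
        then show False using a by simp
      qed (use a in simp)
    qed
  qed
  have bij: "bij_betw ((!) xs) {..<N} S" using bij_betw_nth[OF dist] len setx by simp
  have "{w\<in>S. xs ! i < w} = (!) xs ` {i<..<N}"
  proof
    show "{w\<in>S. xs ! i < w} \<subseteq> (!) xs ` {i<..<N}"
    proof
      fix w assume w: "w \<in> {w\<in>S. xs ! i < w}"
      then obtain j where j: "j < N" "w = xs ! j" using setx len by (auto simp: in_set_conv_nth)
      then have "i < j" using lt_iff[OF i j(1)] w by auto
      then show "w \<in> (!) xs ` {i<..<N}" using j by auto
    qed
  next
    show "(!) xs ` {i<..<N} \<subseteq> {w\<in>S. xs ! i < w}"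
      using lt_iff[OF i] setx len by auto
  qed
  moreover have "inj_on ((!) xs) {i<..<N}"
    using bij by (rule bij_betw_imp_inj_on[THEN inj_on_subset]) auto
  ultimately show "card {w\<in>S. sorted_list_of_set S ! i < w} = N - 1 - i" by (simp add: card_image xs_def)
  show "sorted_list_of_set S ! i \<in> S" using setx len i by (auto simp: xs_def[symmetric])
qed




lemma neg1_neq: "odd (a + b) \<Longrightarrow> (-1::real) ^ a = - ((-1) ^ b)"
  by (cases "even a") (auto simp: even_add)

lemma gen_frac: "a > 0 \<Longrightarrow> F > 0 \<Longrightarrow> - (1 / (2 * (a * F))) * (- (2 * a) * Y * Z) = Y / F * Z"
  for a F Y Z :: real
  by (simp add: field_simps)

lemma gen2: "2 * - s * (- (1 / (2 * G)) * T) = 1 / G * (s * T)" for s G T :: real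
  by (cases "G = 0") (simp_all add: field_simps)

lemma hz: "hermite_zero n m = sorted_list_of_set (Zn n) ! (m - 1)"
  by (simp add: hermite_zero_def hermite_zero_set)

lemma part1:
  assumes "n \<ge> 1"
  shows "(\<integral>t. \<bar>hermite_fun n t\<bar> \<partial>lborel)
           = (1 / real n) * (\<Sum>m=1..n. (-1) ^ (m + n) * hermite_fun (n - 1) (hermite_zero n m))"
proof -
  define c where "c = - (1 / (2 * real n))"
  define \<Phi> where "\<Phi> t = c * hermite_fun (n - 1) t" for t
  have der: "DERIV \<Phi> t :> hermite_fun n t" for t
  proof -
    have "DERIV (hermite_fun (n - 1)) t :> - (2 * (real (n - 1) + 1)) * hermite_fun (Suc (n - 1)) t"
      by (rule hermite_fun_deriv)
    moreover have "Suc (n - 1) = n" "real (n - 1) + 1 = real n" using assms by auto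
    ultimately have "DERIV (hermite_fun (n - 1)) t :> - (2 * real n) * hermite_fun n t" by simp
    then have "DERIV \<Phi> t :> c * (- (2 * real n) * hermite_fun n t)"
      unfolding \<Phi>_def by (rule DERIV_cmult)
    moreover have "c * (- (2 * real n) * hermite_fun n t) = hermite_fun n t"
      using assms by (simp add: c_def)
    ultimately show ?thesis by simp
  qed
  have l1: "(\<Phi> \<longlongrightarrow> 0) at_bot" "(\<Phi> \<longlongrightarrow> 0) at_top"
    unfolding \<Phi>_def[abs_def] by (intro tendsto_mult_right_zero hfun_lim)+
  have "(\<integral>t. \<bar>hermite_fun n t\<bar> \<partial>lborel) = 0 - (-1) ^ card (Zn n) * 0
      + (\<Sum>z\<in>Zn n. 2 * (-1) ^ (card {w\<in>Zn n. z < w} + 1) * \<Phi> z)"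
    by (rule abs_integral[OF Zn_finite der hfun_cont hfun_zero hfun_abs l1])
  also have "\<dots> = (\<Sum>m=1..n. 2 * (-1) ^ (n - m + 1) * \<Phi> (sorted_list_of_set (Zn n) ! (m - 1)))"
    using sorted_sum[OF Zn_finite card_Zn, of "\<lambda>z k. 2 * (-1) ^ (k + 1) * \<Phi> z"] by simp
  also have "\<dots> = (1 / real n) * (\<Sum>m=1..n. (-1) ^ (m + n) * hermite_fun (n - 1) (hermite_zero n m))"
    unfolding sum_distrib_left
  proof (rule sum.cong[OF refl])
    fix m assume m: "m \<in> {1..n}"
    have s: "(-1::real) ^ (n - m + 1) = - ((-1) ^ (m + n))"
      using m by (intro neg1_neq) auto
    show "2 * (-1) ^ (n - m + 1) * \<Phi> (sorted_list_of_set (Zn n) ! (m - 1))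
        = 1 / real n * ((-1) ^ (m + n) * hermite_fun (n - 1) (hermite_zero n m))"
      unfolding s hz \<Phi>_def c_def using assms by (simp add: field_simps)
  qed
  finally show ?thesis .
qed

lemma part2:
  assumes "n \<ge> 1"
  shows "(\<integral>t. t ^ (2*n) / fact (2*n) * \<bar>hermite_fun (2*n+1) t\<bar> \<partial>lborel)
           = (1 / fact (2*n+1)) * (\<Sum>m=1..2*n+1. (-1) ^ (m + 1) * Tm (2*n) (hermite_zero (2*n+1) m))"
proof -
  define c where "c = - (1 / (2 * fact (2*n+1) :: real))"
  define \<phi> where "\<phi> t = t ^ (2*n) / fact (2*n) * hermite_fun (2*n+1) t" for t
  define \<Phi> where "\<Phi> t = c * Tm (2*n) t" for t
  have der: "DERIV \<Phi> t :> \<phi> t" for t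
  proof -
    have "DERIV \<Phi> t :> c * (- (2 * (real (2*n) + 1)) * t ^ (2*n) * hermite_fun (Suc (2*n)) t)"
      unfolding \<Phi>_def by (rule DERIV_cmult[OF Tm_deriv])
    moreover have "c * (- (2 * (real (2*n) + 1)) * t ^ (2*n) * hermite_fun (Suc (2*n)) t) = \<phi> t"
    proof -
      define F where "F = (fact (2*n) :: real)"
      have F0: "F > 0" unfolding F_def by simp
      have f: "fact (2*n+1) = (real (2*n) + 1) * F" unfolding F_def by simp
      have p: "\<phi> t = t ^ (2*n) / F * hermite_fun (Suc (2*n)) t" by (simp add: \<phi>_def F_def)
      show ?thesis unfolding c_def f p by (rule gen_frac[OF _ F0]) simp
    qed
    ultimately show ?thesis by simp
  qed
  have cont: "isCont \<phi> t" for t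
    unfolding \<phi>_def[abs_def] by (auto intro!: continuous_intros hfun_cont)
  have zero: "\<phi> z = 0" if "z \<in> Zn (2*n+1)" for z
    using hfun_zero[OF that] by (simp add: \<phi>_def)
  have pw: "\<bar>t ^ (2*n)\<bar> = t ^ (2*n)" for t :: real
    by (simp add: power_mult)
  have sgn: "\<bar>\<phi> t\<bar> = (-1) ^ card {z\<in>Zn (2*n+1). t < z} * \<phi> t" if "t \<notin> Zn (2*n+1)" for t
    using hfun_abs[OF that] by (simp add: \<phi>_def abs_mult pw)
  have l1: "(\<Phi> \<longlongrightarrow> 0) at_bot" "(\<Phi> \<longlongrightarrow> 0) at_top"
    unfolding \<Phi>_def[abs_def] by (intro tendsto_mult_right_zero Tm_lim)+
  have ie: "(\<lambda>t. t ^ (2*n) / fact (2*n) * \<bar>hermite_fun (2*n+1) t\<bar>) = (\<lambda>t. \<bar>\<phi> t\<bar>)"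
    by (rule ext) (simp add: \<phi>_def abs_mult pw)
  have "(\<integral>t. \<bar>\<phi> t\<bar> \<partial>lborel) = 0 - (-1) ^ card (Zn (2*n+1)) * 0
      + (\<Sum>z\<in>Zn (2*n+1). 2 * (-1) ^ (card {w\<in>Zn (2*n+1). z < w} + 1) * \<Phi> z)"
    by (rule abs_integral[OF Zn_finite der cont zero sgn l1])
  also have "\<dots> = (\<Sum>m=1..2*n+1. 2 * (-1) ^ (2*n+1 - m + 1) * \<Phi> (sorted_list_of_set (Zn (2*n+1)) ! (m - 1)))"
    using sorted_sum[OF Zn_finite card_Zn, of "\<lambda>z k. 2 * (-1) ^ (k + 1) * \<Phi> z"] by simp
  also have "\<dots> = (1 / fact (2*n+1)) * (\<Sum>m=1..2*n+1. (-1) ^ (m + 1) * Tm (2*n) (hermite_zero (2*n+1) m))"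
    unfolding sum_distrib_left
  proof (rule sum.cong[OF refl])
    fix m assume m: "m \<in> {1..2*n+1}"
    have s: "(-1::real) ^ (2*n+1 - m + 1) = - ((-1) ^ (m + 1))"
      using m by (intro neg1_neq) auto
    show "2 * (-1) ^ (2*n+1 - m + 1) * \<Phi> (sorted_list_of_set (Zn (2*n+1)) ! (m - 1))
        = 1 / fact (2*n+1) * ((-1) ^ (m + 1) * Tm (2*n) (hermite_zero (2*n+1) m))"
      unfolding s hz \<Phi>_def c_def by (rule gen2)
  qed
  finally show ?thesis unfolding ie .
qed




lemma zero_notin: "0 \<notin> Zn (2*n)"
  using Hp_zero_even[of n] by (simp add: Zn_def)

lemma Zn_sym: "z \<in> Zn (2*n) \<Longrightarrow> - z \<in> Zn (2*n)"
  using Hp_parity[of "2*n" z] by (simp add: Zn_def)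

lemma card_pos: "card {w\<in>Zn (2*n). 0 < w} = n"
proof -
  let ?Z = "Zn (2*n)"
  let ?P = "{w\<in>?Z. 0 < w}" and ?N = "{w\<in>?Z. w < 0}"
  have NP: "?N = uminus ` ?P"
  proof
    show "?N \<subseteq> uminus ` ?P"
    proof
      fix w assume "w \<in> ?N"
      then have "- w \<in> ?P" using Zn_sym by auto
      then show "w \<in> uminus ` ?P" by (rule rev_image_eqI) simp
    qed
  next
    show "uminus ` ?P \<subseteq> ?N" using Zn_sym by auto
  qed
  have cN: "card ?N = card ?P" unfolding NP by (rule card_image) (simp add: inj_on_def)
  have U: "?Z = ?P \<union> ?N"
  proof
    show "?Z \<subseteq> ?P \<union> ?N"
    proof
      fix x assume x: "x \<in> ?Z"
      then have "x \<noteq> 0" using zero_notin[of n] by auto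
      then show "x \<in> ?P \<union> ?N" using x by auto
    qed
  qed auto
  have "card (?P \<union> ?N) = card ?P + card ?N"
    by (rule card_Un_disjoint) (use Zn_finite in auto)
  moreover have "card ?Z = card (?P \<union> ?N)" using U by (rule arg_cong)
  ultimately have "card ?Z = card ?P + card ?N" by simp
  then have "2 * n = card ?P + card ?P" using card_Zn[of "2*n"] cN by simp
  then show ?thesis by simp
qed



lemma neg_iff:
  assumes m: "1 \<le> m" "m \<le> 2*n"
  shows "sorted_list_of_set (Zn (2*n)) ! (m - 1) < 0 \<longleftrightarrow> m \<le> n"
proof -
  let ?Z = "Zn (2*n)" and ?z = "sorted_list_of_set (Zn (2*n)) ! (m - 1)"
  have i: "m - 1 < 2*n" using m by simp
  have c: "card {w\<in>?Z. ?z < w} = 2*n - m"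
    using sorted_cnt(1)[OF Zn_finite card_Zn i] m by simp
  have zZ: "?z \<in> ?Z" using sorted_cnt(2)[OF Zn_finite card_Zn i] .
  have z0: "?z \<noteq> 0" using zZ zero_notin[of n] by metis
  have fin: "finite {w\<in>?Z. ?z < w}" "finite {w\<in>?Z. 0 < w}" using Zn_finite by auto
  show ?thesis
  proof
    assume "?z < 0"
    then have "{w\<in>?Z. 0 < w} \<subseteq> {w\<in>?Z. ?z < w}" by auto
    then have "card {w\<in>?Z. 0 < w} \<le> card {w\<in>?Z. ?z < w}" by (rule card_mono[OF fin(1)])
    then have "n \<le> 2*n - m" using c card_pos[of n] by simp
    then show "m \<le> n" using m by presburger
  next
    assume mn: "m \<le> n"
    show "?z < 0"
    proof (rule ccontr)
      assume "\<not> ?z < 0"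
      then have zp: "?z > 0" using z0 by simp
      then have "{w\<in>?Z. ?z < w} \<subseteq> {w\<in>?Z. 0 < w} - {?z}" by auto
      moreover have "card ({w\<in>?Z. 0 < w} - {?z}) = n - 1"
        using zp zZ card_pos[of n] fin(2) by (simp add: card_Diff_singleton)
      moreover have "finite ({w\<in>?Z. 0 < w} - {?z})" using fin(2) by simp
      ultimately have "2*n - m \<le> n - 1" using card_mono[of "{w\<in>?Z. 0 < w} - {?z}" "{w\<in>?Z. ?z < w}"] c by simp
      then show False using mn m by simp
    qed
  qed
qed

lemma Tm_at0: "Tm M 0 = 1 / 2 ^ M * (1 / sqrt pi)"
proof -
  have "Tm M 0 = (\<Sum>k\<in>{0..M}. if k = M then 1 / 2 ^ M * hermite_fun 0 0 else 0)"
    unfolding Tm_def by (rule sum.cong) auto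
  also have "\<dots> = 1 / 2 ^ M * hermite_fun 0 0" by simp
  finally show ?thesis by (simp add: hermite_fun_poly)
qed

lemma gen3: "F \<noteq> 0 \<Longrightarrow> 2 * (-1) ^ (n + 1) * (- (1 / (2 * F)) * (1 / P * (1 / Q))) = (-1) ^ n / (F * P * Q)"
  for F P Q :: real
  by (cases "P = 0"; cases "Q = 0") (simp_all add: field_simps)

lemma split_sum: "(\<Sum>m=1..2*n. g m) = (\<Sum>m=1..n. g m) + (\<Sum>m=n+1..2*n. (g m :: real))"
  for n :: nat
  using sum.ub_add_nat[of 1 n g n] by (simp add: mult_2)

lemma part3:
  assumes n1: "n \<ge> 1"
  shows "(\<integral>t. \<bar>t\<bar> ^ (2*n - 1) / fact (2*n - 1) * \<bar>hermite_fun (2*n) t\<bar> \<partial>lborel)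
           = (1 / fact (2*n)) * (\<Sum>m=1..n. (-1) ^ (m + 1) * Tm (2*n-1) (hermite_zero (2*n) m))
             + (-1) ^ n / (fact (2*n) * 2 ^ (2*n - 1) * sqrt pi)
             + (1 / fact (2*n)) * (\<Sum>m=n+1..2*n. (-1) ^ m * Tm (2*n-1) (hermite_zero (2*n) m))"
proof -
  define K where "K = 2*n - 1"
  have SK: "Suc K = 2*n" and K1: "K \<ge> 1" and oK: "odd K" using n1 by (auto simp: K_def)
  define F where "F = (fact (2*n) :: real)"
  have F0: "F > 0" by (simp add: F_def)
  have FK: "F = (real K + 1) * fact K" unfolding F_def SK[symmetric] by simp
  define c where "c = - (1 / (2 * F))"
  define \<phi> where "\<phi> t = t ^ K / fact K * hermite_fun (2*n) t" for t
  define \<Phi> where "\<Phi> t = c * Tm K t" for t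
  let ?Z = "Zn (2*n)"
  let ?S = "insert 0 ?Z"
  have der: "DERIV \<Phi> t :> \<phi> t" for t
  proof -
    have "DERIV \<Phi> t :> c * (- (2 * (real K + 1)) * t ^ K * hermite_fun (Suc K) t)"
      unfolding \<Phi>_def by (rule DERIV_cmult[OF Tm_deriv])
    moreover have "c * (- (2 * (real K + 1)) * t ^ K * hermite_fun (Suc K) t) = \<phi> t"
      unfolding c_def FK \<phi>_def SK[symmetric] by (rule gen_frac) auto
    ultimately show ?thesis by simp
  qed
  have cont: "isCont \<phi> t" for t
    unfolding \<phi>_def[abs_def] by (auto intro!: continuous_intros hfun_cont)
  have zero: "\<phi> z = 0" if "z \<in> ?S" for z
  proof (cases "z = 0")
    case True then show ?thesis using K1 by (simp add: \<phi>_def)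
  next
    case False then have "z \<in> ?Z" using that by simp
    then show ?thesis using hfun_zero by (simp add: \<phi>_def)
  qed
  have sgn: "\<bar>\<phi> t\<bar> = (-1) ^ card {z\<in>?S. t < z} * \<phi> t" if "t \<notin> ?S" for t
  proof -
    have t0: "t \<noteq> 0" and tZ: "t \<notin> ?Z" using that by auto
    have hf: "\<bar>hermite_fun (2*n) t\<bar> = (-1) ^ card {z\<in>?Z. t < z} * hermite_fun (2*n) t"
      by (rule hfun_abs[OF tZ])
    have fin: "finite {z\<in>?Z. t < z}" using Zn_finite by simp
    have nz: "0 \<notin> {z\<in>?Z. t < z}" using zero_notin[of n] by simp
    show ?thesis
    proof (cases "t < 0")
      case True
      have "{z\<in>?S. t < z} = insert 0 {z\<in>?Z. t < z}" using True by auto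
      then have cs: "card {z\<in>?S. t < z} = Suc (card {z\<in>?Z. t < z})" using fin nz by simp
      have tk: "t ^ K < 0" using True oK by (simp add: power_less_zero_eq)
      have "\<bar>t ^ K\<bar> = - (t ^ K)" using tk by (rule abs_of_neg)
      then show ?thesis unfolding cs \<phi>_def using hf by (simp add: abs_mult)
    next
      case False
      then have tp: "t > 0" using t0 by simp
      have "{z\<in>?S. t < z} = {z\<in>?Z. t < z}" using tp by auto
      then show ?thesis unfolding \<phi>_def using hf tp by (simp add: abs_mult)
    qed
  qed
  have l1: "(\<Phi> \<longlongrightarrow> 0) at_bot" "(\<Phi> \<longlongrightarrow> 0) at_top"
    unfolding \<Phi>_def[abs_def] by (intro tendsto_mult_right_zero Tm_lim)+
  have ie: "(\<lambda>t. \<bar>t\<bar> ^ (2*n - 1) / fact (2*n - 1) * \<bar>hermite_fun (2*n) t\<bar>) = (\<lambda>t. \<bar>\<phi> t\<bar>)"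
    by (rule ext) (simp add: \<phi>_def abs_mult power_abs K_def)
  have finS: "finite ?S" using Zn_finite by simp
  have "(\<integral>t. \<bar>\<phi> t\<bar> \<partial>lborel) = 0 - (-1) ^ card ?S * 0
      + (\<Sum>z\<in>?S. 2 * (-1) ^ (card {w\<in>?S. z < w} + 1) * \<Phi> z)"
    by (rule abs_integral[OF finS der cont zero sgn l1])
  also have "\<dots> = 2 * (-1) ^ (card {w\<in>?S. 0 < w} + 1) * \<Phi> 0
      + (\<Sum>z\<in>?Z. 2 * (-1) ^ (card {w\<in>?S. z < w} + 1) * \<Phi> z)"
    by (simp only: sum.insert[OF Zn_finite zero_notin[of n]])
  also have "card {w\<in>?S. 0 < w} = n"
  proof -
    have "{w\<in>?S. 0 < w} = {w\<in>?Z. 0 < w}" by auto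
    then show ?thesis using card_pos by simp
  qed
  also have "(\<Sum>z\<in>?Z. 2 * (-1) ^ (card {w\<in>?S. z < w} + 1) * \<Phi> z)
      = (\<Sum>z\<in>?Z. 2 * (-1) ^ (card {w\<in>?Z. z < w} + (if z < 0 then 1 else 0) + 1) * \<Phi> z)"
  proof (rule sum.cong[OF refl])
    fix z assume zZ: "z \<in> ?Z"
    have fin: "finite {w\<in>?Z. z < w}" using Zn_finite by simp
    have nz: "0 \<notin> {w\<in>?Z. z < w}" using zero_notin[of n] by simp
    have "card {w\<in>?S. z < w} = card {w\<in>?Z. z < w} + (if z < 0 then 1 else 0)"
    proof (cases "z < 0")
      case True
      then have "{w\<in>?S. z < w} = insert 0 {w\<in>?Z. z < w}" by auto
      then show ?thesis using fin nz True by simp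
    next
      case False
      then have "{w\<in>?S. z < w} = {w\<in>?Z. z < w}" by auto
      then show ?thesis using False by simp
    qed
    then show "2 * (-1) ^ (card {w\<in>?S. z < w} + 1) * \<Phi> z
        = 2 * (-1) ^ (card {w\<in>?Z. z < w} + (if z < 0 then 1 else 0) + 1) * \<Phi> z" by simp
  qed
  also have "\<dots> = (\<Sum>m=1..2*n. 2 * (-1) ^ (2*n - m + (if sorted_list_of_set ?Z ! (m - 1) < 0 then 1 else 0) + 1)
                     * \<Phi> (sorted_list_of_set ?Z ! (m - 1)))"
    using sorted_sum[OF Zn_finite card_Zn,
        of "\<lambda>z k. 2 * (-1) ^ (k + (if z < 0 then 1 else 0) + 1) * \<Phi> z" "2*n"] by simp
  also have "\<dots> = (\<Sum>m=1..n. 2 * (-1) ^ (2*n - m + (if sorted_list_of_set ?Z ! (m - 1) < 0 then 1 else 0) + 1)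
                     * \<Phi> (sorted_list_of_set ?Z ! (m - 1)))
       + (\<Sum>m=n+1..2*n. 2 * (-1) ^ (2*n - m + (if sorted_list_of_set ?Z ! (m - 1) < 0 then 1 else 0) + 1)
                     * \<Phi> (sorted_list_of_set ?Z ! (m - 1)))"
    by (rule split_sum)
  also have "(\<Sum>m=1..n. 2 * (-1) ^ (2*n - m + (if sorted_list_of_set ?Z ! (m - 1) < 0 then 1 else 0) + 1)
                     * \<Phi> (sorted_list_of_set ?Z ! (m - 1)))
      = (1 / fact (2*n)) * (\<Sum>m=1..n. (-1) ^ (m + 1) * Tm (2*n-1) (hermite_zero (2*n) m))"
    unfolding sum_distrib_left
  proof (rule sum.cong[OF refl])
    fix m assume m: "m \<in> {1..n}"
    have neg: "sorted_list_of_set ?Z ! (m - 1) < 0" using neg_iff[of m n] m by simp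
    have s: "(-1::real) ^ (2*n - m + 1 + 1) = - ((-1) ^ (m + 1))"
      using m by (intro neg1_neq) auto
    show "2 * (-1) ^ (2*n - m + (if sorted_list_of_set ?Z ! (m - 1) < 0 then 1 else 0) + 1)
                     * \<Phi> (sorted_list_of_set ?Z ! (m - 1))
        = 1 / fact (2*n) * ((-1) ^ (m + 1) * Tm (2*n-1) (hermite_zero (2*n) m))"
      unfolding if_P[OF neg] s hz \<Phi>_def c_def F_def K_def by (rule gen2)
  qed
  also have "(\<Sum>m=n+1..2*n. 2 * (-1) ^ (2*n - m + (if sorted_list_of_set ?Z ! (m - 1) < 0 then 1 else 0) + 1)
                     * \<Phi> (sorted_list_of_set ?Z ! (m - 1)))
      = (1 / fact (2*n)) * (\<Sum>m=n+1..2*n. (-1) ^ m * Tm (2*n-1) (hermite_zero (2*n) m))"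
    unfolding sum_distrib_left
  proof (rule sum.cong[OF refl])
    fix m assume m: "m \<in> {n+1..2*n}"
    have neg: "\<not> sorted_list_of_set ?Z ! (m - 1) < 0" using neg_iff[of m n] m by simp
    have s: "(-1::real) ^ (2*n - m + 0 + 1) = - ((-1) ^ m)"
      using m by (intro neg1_neq) auto
    show "2 * (-1) ^ (2*n - m + (if sorted_list_of_set ?Z ! (m - 1) < 0 then 1 else 0) + 1)
                     * \<Phi> (sorted_list_of_set ?Z ! (m - 1))
        = 1 / fact (2*n) * ((-1) ^ m * Tm (2*n-1) (hermite_zero (2*n) m))"
      unfolding if_not_P[OF neg] s hz \<Phi>_def c_def F_def K_def by (rule gen2)
  qed
  also have "2 * (-1) ^ (n + 1) * \<Phi> 0 = (-1) ^ n / (fact (2*n) * 2 ^ (2*n - 1) * sqrt pi)"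
    unfolding \<Phi>_def Tm_at0 c_def using F0 unfolding F_def K_def by (intro gen3) simp
  finally show ?thesis unfolding ie by simp
qed


theorem corollary3p4:
  fixes n :: nat
  assumes "n \<ge> 1"
  shows "((\<integral>t. \<bar>hermite_fun n t\<bar> \<partial>lborel)
           = (1 / real n) * (\<Sum>m=1..n. (-1) ^ (m + n) * hermite_fun (n - 1) (hermite_zero n m)))
    \<and> ((\<integral>t. t ^ (2*n) / fact (2*n) * \<bar>hermite_fun (2*n+1) t\<bar> \<partial>lborel)
           = (1 / fact (2*n+1)) * (\<Sum>m=1..2*n+1. (-1) ^ (m + 1) *
               (\<Sum>k=0..2*n. (1 / 2 ^ k) * (hermite_zero (2*n+1) m) ^ (2*n - k)
                   * hermite_fun (2*n - k) (hermite_zero (2*n+1) m))))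
    \<and> ((\<integral>t. \<bar>t\<bar> ^ (2*n - 1) / fact (2*n - 1) * \<bar>hermite_fun (2*n) t\<bar> \<partial>lborel)
           = (1 / fact (2*n)) * (\<Sum>m=1..n. (-1) ^ (m + 1) *
               (\<Sum>k=0..2*n-1. (1 / 2 ^ k) * (hermite_zero (2*n) m) ^ (2*n - 1 - k)
                   * hermite_fun (2*n - 1 - k) (hermite_zero (2*n) m)))
             + (-1) ^ n / (fact (2*n) * 2 ^ (2*n - 1) * sqrt pi)
             + (1 / fact (2*n)) * (\<Sum>m=n+1..2*n. (-1) ^ m *
               (\<Sum>k=0..2*n-1. (1 / 2 ^ k) * (hermite_zero (2*n) m) ^ (2*n - 1 - k)
                   * hermite_fun (2*n - 1 - k) (hermite_zero (2*n) m))))"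
  using part1[OF assms] part2[OF assms, unfolded Tm_def] part3[OF assms, unfolded Tm_def]
  by blast

end
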